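(* Let $(S,E,f)$ be a reduced and closed observation table for $U$ and $D$ as defined below, let $\alpha\in S\cdot E$, and let $w\in\Sigma^*$ be a prefix of $\alpha$ with $\alpha=w\alpha'$. Let $r=\delta_f^*(\epsilon,w)$. Then $\alpha\in U$ if and only if $r\alpha'\in U$.
   Context: $\Sigma$ is a finite alphabet, $U\subseteq\Sigma^\omega$ an $\omega$-language recognizable by a weak deterministic Büchi automaton, and $D\subseteq\Sigma^\omega$ a regular set with trivial right-congruence (for all $w\in\Sigma^*,\alpha$: $\alpha\in D\iff w\alpha\in D$). An observation table $(S,E,f)$ consists of a prefix-closed finite $S\subseteq\Sigma^*$, a suffix-closed finite set $E$ of ultimately periodic words with $E\cap D=\emptyset$, and $f:(S\cup S\Sigma)\times E\to\{\text{yes},\text{no}\}$ with $f(s,\alpha)=\text{yes}$ iff $s\alpha\in U$. For $s\in S\cup S\Sigma$ let $f_s(\alpha)=f(s,\alpha)$. The table is reduced if $f_s\neq f_t$ for distinct $s,t\in S$, and closed if for every $s\in S\Sigma$ there is $t\in S$ with $f_s=f_t$. For a reduced closed table, $\mathcal{T}_{S,f}=(\Sigma,S,\delta_f,\epsilon)$ with $\delta_f(s,\sigma)$ the unique $t\in S$ with $f_{s\sigma}=f_t$, and $\delta_f^*$ the extension of $\delta_f$ to finite words. *)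

theory Defs
  imports Main "HOL-Library.Omega_Words_Fun"
begin

definition ultimately_periodic :: "'a word \<Rightarrow> bool" where
  "ultimately_periodic \<alpha> \<longleftrightarrow> (\<exists>u v. v \<noteq> [] \<and> \<alpha> = u \<frown> v\<^sup>\<omega>)"

definition dba_wf :: "nat set \<Rightarrow> nat \<Rightarrow> (nat \<Rightarrow> 'a \<Rightarrow> nat) \<Rightarrow> nat set \<Rightarrow> bool" where
  "dba_wf Q q0 \<delta> F \<longleftrightarrow> finite Q \<and> q0 \<in> Q \<and> (\<forall>q\<in>Q. \<forall>a. \<delta> q a \<in> Q) \<and> F \<subseteq> Q"

definition dba_run :: "(nat \<Rightarrow> 'a \<Rightarrow> nat) \<Rightarrow> nat \<Rightarrow> 'a word \<Rightarrow> nat \<Rightarrow> nat" where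
  "dba_run \<delta> q0 \<alpha> n = fold (\<lambda>a q. \<delta> q a) (prefix n \<alpha>) q0"

definition dba_lang :: "nat \<Rightarrow> (nat \<Rightarrow> 'a \<Rightarrow> nat) \<Rightarrow> nat set \<Rightarrow> 'a word set" where
  "dba_lang q0 \<delta> F = {\<alpha>. \<exists>\<^sub>\<infinity>n. dba_run \<delta> q0 \<alpha> n \<in> F}"

definition dba_weak :: "nat set \<Rightarrow> (nat \<Rightarrow> 'a \<Rightarrow> nat) \<Rightarrow> nat set \<Rightarrow> bool" where
  "dba_weak Q \<delta> F \<longleftrightarrow>
     (\<forall>q\<in>Q. \<forall>q'\<in>Q. (\<exists>u. fold (\<lambda>a p. \<delta> p a) u q = q') \<and> (\<exists>v. fold (\<lambda>a p. \<delta> p a) v q' = q)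
        \<longrightarrow> (q \<in> F \<longleftrightarrow> q' \<in> F))"

definition weak_dba_recognizable :: "'a word set \<Rightarrow> bool" where
  "weak_dba_recognizable U \<longleftrightarrow>
     (\<exists>Q q0 (\<delta> :: nat \<Rightarrow> 'a \<Rightarrow> nat) F. dba_wf Q q0 \<delta> F \<and> dba_weak Q \<delta> F \<and> U = dba_lang q0 \<delta> F)"

definition omega_regular :: "'a word set \<Rightarrow> bool" where
  "omega_regular L \<longleftrightarrow>
     (\<exists>(Q :: nat set) I (\<Delta> :: nat \<Rightarrow> 'a \<Rightarrow> nat set) F.
        finite Q \<and> I \<subseteq> Q \<and> F \<subseteq> Q \<and> (\<forall>q\<in>Q. \<forall>a. \<Delta> q a \<subseteq> Q) \<and>
        L = {\<alpha>. \<exists>\<rho>. \<rho> 0 \<in> I \<and> (\<forall>n. \<rho> (Suc n) \<in> \<Delta> (\<rho> n) (\<alpha> n))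
                       \<and> (\<exists>\<^sub>\<infinity>n. \<rho> n \<in> F)})"

definition trivial_right_congruence :: "'a word set \<Rightarrow> bool" where
  "trivial_right_congruence D \<longleftrightarrow> (\<forall>w \<alpha>. \<alpha> \<in> D \<longleftrightarrow> w \<frown> \<alpha> \<in> D)"

definition obs_table :: "'a word set \<Rightarrow> 'a word set \<Rightarrow> 'a list set \<Rightarrow> 'a word set
                          \<Rightarrow> ('a list \<Rightarrow> 'a word \<Rightarrow> bool) \<Rightarrow> bool" where
  "obs_table U D S E f \<longleftrightarrow>
     finite S \<and> (\<forall>u v. u @ v \<in> S \<longrightarrow> u \<in> S) \<and>
     finite E \<and> (\<forall>u \<beta>. u \<frown> \<beta> \<in> E \<longrightarrow> \<beta> \<in> E) \<and>
     (\<forall>e\<in>E. ultimately_periodic e) \<and> E \<inter> D = {} \<and>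
     (\<forall>s e. (s \<in> S \<or> (\<exists>s'\<in>S. \<exists>\<sigma>. s = s' @ [\<sigma>])) \<and> e \<in> E \<longrightarrow> (f s e \<longleftrightarrow> s \<frown> e \<in> U))"

definition row_eq :: "'a word set \<Rightarrow> ('a list \<Rightarrow> 'a word \<Rightarrow> bool) \<Rightarrow> 'a list \<Rightarrow> 'a list \<Rightarrow> bool" where
  "row_eq E f s t \<longleftrightarrow> (\<forall>e\<in>E. f s e = f t e)"

definition table_reduced :: "'a list set \<Rightarrow> 'a word set \<Rightarrow> ('a list \<Rightarrow> 'a word \<Rightarrow> bool) \<Rightarrow> bool" where
  "table_reduced S E f \<longleftrightarrow> (\<forall>s\<in>S. \<forall>t\<in>S. s \<noteq> t \<longrightarrow> \<not> row_eq E f s t)"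

definition table_closed :: "'a list set \<Rightarrow> 'a word set \<Rightarrow> ('a list \<Rightarrow> 'a word \<Rightarrow> bool) \<Rightarrow> bool" where
  "table_closed S E f \<longleftrightarrow> (\<forall>s\<in>S. \<forall>\<sigma>. \<exists>t\<in>S. row_eq E f (s @ [\<sigma>]) t)"

definition delta_f :: "'a list set \<Rightarrow> 'a word set \<Rightarrow> ('a list \<Rightarrow> 'a word \<Rightarrow> bool) \<Rightarrow> 'a list \<Rightarrow> 'a \<Rightarrow> 'a list" where
  "delta_f S E f s \<sigma> = (THE t. t \<in> S \<and> row_eq E f (s @ [\<sigma>]) t)"

definition delta_f_star :: "'a list set \<Rightarrow> 'a word set \<Rightarrow> ('a list \<Rightarrow> 'a word \<Rightarrow> bool) \<Rightarrow> 'a list \<Rightarrow> 'a list \<Rightarrow> 'a list" where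
  "delta_f_star S E f s w = fold (\<lambda>\<sigma> q. delta_f S E f q \<sigma>) w s"

end

theory Submission
  imports Defs
begin

lemma split_conc:
  assumes "a \<frown> x = b \<frown> y" "length a \<le> length b"
  shows "\<exists>v. b = a @ v \<and> x = v \<frown> y"
proof -
  obtain v1 v2 where x: "x = v1 \<frown> v2" "length v1 = length b - length a"
    by (rule word_split)
  have "(a @ v1) \<frown> v2 = b \<frown> y" using assms(1) x(1) by simp
  moreover have "length (a @ v1) = length b" using x(2) assms(2) by simp
  ultimately have "a @ v1 = b" "v2 = y" using concat_eq by blast+
  then show ?thesis using x(1) by blast
qed

lemma row_uniq:
  assumes "table_reduced S E f" "t \<in> S" "t' \<in> S" "row_eq E f x t" "row_eq E f x t'"
  shows "t' = t"
proof -
  have "row_eq E f t' t" using assms(4,5) unfolding row_eq_def by simp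
  then show ?thesis using assms(1,2,3) unfolding table_reduced_def by blast
qed

lemma delta_unique:
  assumes T: "obs_table U D S E f" "table_reduced S E f" "table_closed S E f"
    and s: "s \<in> S"
  shows "delta_f S E f s \<sigma> \<in> S \<and> row_eq E f (s @ [\<sigma>]) (delta_f S E f s \<sigma>)"
proof -
  have "\<exists>t\<in>S. row_eq E f (s @ [\<sigma>]) t"
    using T(3) s unfolding table_closed_def by blast
  then obtain t where t: "t \<in> S" "row_eq E f (s @ [\<sigma>]) t" by blast
  have u: "t' = t" if "t' \<in> S \<and> row_eq E f (s @ [\<sigma>]) t'" for t'
    using row_uniq[OF T(2) t(1), of t' "s @ [\<sigma>]"] that t(2) by blast
  have "(THE t. t \<in> S \<and> row_eq E f (s @ [\<sigma>]) t) = t"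
    apply (rule the_equality)
    using t apply blast
    using u apply blast
    done
  then have "delta_f S E f s \<sigma> = t" unfolding delta_f_def .
  then show ?thesis using t by simp
qed

lemma L1:
  assumes T: "obs_table U D S E f" "table_reduced S E f" "table_closed S E f"
  shows "t \<in> S \<Longrightarrow> t @ v \<in> S \<Longrightarrow> delta_f_star S E f t v = t @ v"
proof (induction v arbitrary: t)
  case Nil
  then show ?case by (simp add: delta_f_star_def)
next
  case (Cons a v)
  have pc: "\<forall>u v. u @ v \<in> S \<longrightarrow> u \<in> S" using T(1) unfolding obs_table_def by blast
  have ta: "t @ [a] \<in> S" using Cons(3) pc by (metis append.assoc append_Cons append_Nil)
  have d: "delta_f S E f t a = t @ [a]"
  proof -
    have u: "t' = t @ [a]" if "t' \<in> S \<and> row_eq E f (t @ [a]) t'" for t'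
      using row_uniq[OF T(2) ta, of t' "t @ [a]"] that by (simp add: row_eq_def)
    have "(THE t'. t' \<in> S \<and> row_eq E f (t @ [a]) t') = t @ [a]"
      apply (rule the_equality)
      using ta apply (simp add: row_eq_def)
      using u apply blast
      done
    then show ?thesis unfolding delta_f_def .
  qed
  have "delta_f_star S E f t (a # v) = delta_f_star S E f (t @ [a]) v"
    by (simp add: delta_f_star_def d)
  also have "\<dots> = t @ a # v" using Cons.IH[OF ta] Cons(3) by simp
  finally show ?case .
qed

lemma L2:
  assumes T: "obs_table U D S E f" "table_reduced S E f" "table_closed S E f"
  shows "t \<in> S \<Longrightarrow> u \<frown> \<beta> \<in> E \<Longrightarrow>
    delta_f_star S E f t u \<in> S \<and> (t \<frown> (u \<frown> \<beta>) \<in> U \<longleftrightarrow> delta_f_star S E f t u \<frown> \<beta> \<in> U)"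
proof (induction u arbitrary: t)
  case Nil
  then show ?case by (simp add: delta_f_star_def)
next
  case (Cons a u)
  have sc: "\<forall>u \<beta>. u \<frown> \<beta> \<in> E \<longrightarrow> \<beta> \<in> E" using T(1) unfolding obs_table_def by blast
  have uE: "u \<frown> \<beta> \<in> E" using Cons(3) sc by (metis append_Cons append_Nil conc_conc)
  define t' where "t' = delta_f S E f t a"
  have t': "t' \<in> S" "row_eq E f (t @ [a]) t'" using delta_unique[OF T Cons(2)] t'_def by auto
  have fdef: "\<forall>s e. (s \<in> S \<or> (\<exists>s'\<in>S. \<exists>\<sigma>. s = s' @ [\<sigma>])) \<and> e \<in> E \<longrightarrow> (f s e \<longleftrightarrow> s \<frown> e \<in> U)"
    using T(1) unfolding obs_table_def by blast
  have "t \<frown> ((a # u) \<frown> \<beta>) \<in> U \<longleftrightarrow> (t @ [a]) \<frown> (u \<frown> \<beta>) \<in> U"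
    by (metis append_Cons append_Nil conc_conc)
  also have "\<dots> \<longleftrightarrow> f (t @ [a]) (u \<frown> \<beta>)" using fdef uE Cons(2) by blast
  also have "\<dots> \<longleftrightarrow> f t' (u \<frown> \<beta>)" using t'(2) uE unfolding row_eq_def by blast
  also have "\<dots> \<longleftrightarrow> t' \<frown> (u \<frown> \<beta>) \<in> U" using fdef uE t'(1) by blast
  finally have e: "t \<frown> ((a # u) \<frown> \<beta>) \<in> U \<longleftrightarrow> t' \<frown> (u \<frown> \<beta>) \<in> U" .
  have ds: "delta_f_star S E f t (a # u) = delta_f_star S E f t' u"
    by (simp add: delta_f_star_def t'_def)
  show ?case using Cons.IH[OF t'(1) uE] e ds by simp
qed

theorem lemma6:
  fixes U D :: "('a :: finite) word set"
    and S :: "'a list set" and E :: "'a word set" and f :: "'a list \<Rightarrow> 'a word \<Rightarrow> bool"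
    and \<alpha> \<alpha>' :: "'a word" and w :: "'a list"
  assumes "weak_dba_recognizable U"
    and "omega_regular D" and "trivial_right_congruence D"
    and "obs_table U D S E f"
    and "table_reduced S E f" and "table_closed S E f"
    and "\<exists>s\<in>S. \<exists>e\<in>E. \<alpha> = s \<frown> e"
    and "\<alpha> = w \<frown> \<alpha>'"
  shows "\<alpha> \<in> U \<longleftrightarrow> delta_f_star S E f [] w \<frown> \<alpha>' \<in> U"
proof -
  note T = assms(4,5,6)
  obtain s e where se: "s \<in> S" "e \<in> E" "\<alpha> = s \<frown> e" using assms(7) by blast
  have pc: "\<forall>u v. u @ v \<in> S \<longrightarrow> u \<in> S" using T(1) unfolding obs_table_def by blast
  have nil: "[] \<in> S" using pc se(1) by (metis append_Nil)
  show ?thesis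
  proof (cases "length w \<le> length s")
    case True
    then obtain v where v: "s = w @ v" "\<alpha>' = v \<frown> e"
      using split_conc[of w \<alpha>' s e] se(3) assms(8) by metis
    have "w \<in> S" using pc v(1) se(1) by blast
    then have "delta_f_star S E f [] w = w" using L1[OF T, of "[]" w] nil by simp
    then show ?thesis using assms(8) by simp
  next
    case False
    then obtain u where u: "w = s @ u" "e = u \<frown> \<alpha>'"
      using split_conc[of s e w \<alpha>'] se(3) assms(8) by fastforce
    have "delta_f_star S E f [] s = s" using L1[OF T, of "[]" s] nil se(1) by simp
    then have "delta_f_star S E f [] w = delta_f_star S E f s u"
      using u(1) by (simp add: delta_f_star_def)
    then show ?thesis using L2[OF T se(1), of u \<alpha>'] u se by simp
  qed
qed

end
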